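(* For $m\geq1$ let $T_m$ denote the number of integer sequences $(d_1,\ldots,d_m)$ such that $d_j\in\{1,-3,-4,-5,\ldots\}$ for all $1\leq j\leq m$, $\sum_{j=1}^k d_j\geq 1$ for all $1\leq k\leq m$, and $\sum_{j=1}^m d_j=1$. Then $T_{2M}=o(5^M)$ as $M\to\infty$. *)

theory Defs
  imports "HOL-Analysis.Analysis" "HOL-Library.Landau_Symbols"
begin

definition allowed_step :: "int \<Rightarrow> bool" where
  "allowed_step d \<longleftrightarrow> d = 1 \<or> d \<le> -3"

definition T_seqs :: "nat \<Rightarrow> int list set" where
  "T_seqs m = {ds. length ds = m \<and> (\<forall>d\<in>set ds. allowed_step d)
      \<and> (\<forall>k\<in>{1..m}. sum_list (take k ds) \<ge> 1) \<and> sum_list ds = 1}"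

definition T :: "nat \<Rightarrow> nat" where
  "T m = card (T_seqs m)"

end

theory Submission
  imports Defs "HOL-Real_Asymp.Real_Asymp"
begin

lemma sum_lists_prod:
  fixes f :: "int \<Rightarrow> real"
  assumes "finite S"
  shows "(\<Sum>ds\<in>{ds. length ds = n \<and> set ds \<subseteq> S}. prod_list (map f ds)) = (sum f S) ^ n"
proof (induction n)
  case 0
  have "{ds. length ds = 0 \<and> set ds \<subseteq> S} = {[]}" by auto
  then show ?case by simp
next
  case (Suc n)
  let ?L = "\<lambda>n. {ds. length ds = n \<and> set ds \<subseteq> S}"
  have eq: "?L (Suc n) = (\<lambda>(x,xs). x#xs) ` (S \<times> ?L n)"
  proof
    show "?L (Suc n) \<subseteq> (\<lambda>(x,xs). x#xs) ` (S \<times> ?L n)"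
    proof
      fix ds assume "ds \<in> ?L (Suc n)"
      then obtain x xs where "ds = x#xs" "x \<in> S" "xs \<in> ?L n"
        by (cases ds) auto
      then show "ds \<in> (\<lambda>(x,xs). x#xs) ` (S \<times> ?L n)" by force
    qed
  qed auto
  have inj: "inj_on (\<lambda>(x,xs). x#xs) (S \<times> ?L n)" by (auto simp: inj_on_def)
  have "(\<Sum>ds\<in>?L (Suc n). prod_list (map f ds)) = (\<Sum>(x,xs)\<in>S \<times> ?L n. f x * prod_list (map f xs))"
    unfolding eq by (subst sum.reindex[OF inj]) (simp add: case_prod_unfold)
  also have "\<dots> = (\<Sum>x\<in>S. \<Sum>xs\<in>?L n. f x * prod_list (map f xs))"
    by (simp add: sum.cartesian_product')
  also have "\<dots> = sum f S * (\<Sum>xs\<in>?L n. prod_list (map f xs))"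
    by (rule sum_product[symmetric])
  finally show ?case using Suc by simp
qed

lemma sum_list_le_length:
  assumes "\<forall>d\<in>set ds. d \<le> (1::int)"
  shows "sum_list ds \<le> int (length ds)"
  using assms by (induction ds) auto

lemma powi_sum_list:
  "(x::real) \<noteq> 0 \<Longrightarrow> x powi (sum_list ds) = prod_list (map (\<lambda>d. x powi d) ds)"
  by (induction ds) (auto simp: power_int_add)

lemma T_seqs_sub:
  "T_seqs m \<subseteq> {ds. length ds = m \<and> set ds \<subseteq> insert 1 {-(int m)..-3}}"
proof
  fix ds assume ds: "ds \<in> T_seqs m"
  have len: "length ds = m" and al: "\<forall>d\<in>set ds. allowed_step d"
    and ps: "\<forall>k\<in>{1..m}. sum_list (take k ds) \<ge> 1" using ds by (auto simp: T_seqs_def)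
  have H: "d \<in> insert 1 {-(int m)..-3}" if "d \<in> set ds" for d
  proof -
    obtain i where i: "i < m" "ds ! i = d" using \<open>d \<in> set ds\<close> len by (auto simp: in_set_conv_nth)
    have le1: "\<forall>d\<in>set ds. d \<le> 1" using al by (auto simp: allowed_step_def)
    have "sum_list (take i ds) \<le> int (length (take i ds))"
      using le1 by (intro sum_list_le_length) (auto dest: in_set_takeD)
    also have "\<dots> = int i" using i len by simp
    finally have a: "sum_list (take i ds) \<le> int i" .
    have b: "sum_list (take (Suc i) ds) \<ge> 1" using ps i by auto
    have "take (Suc i) ds = take i ds @ [d]" using i len by (simp add: take_Suc_conv_app_nth)
    then have "d \<ge> 1 - int i" using a b by simp
    then show ?thesis using al \<open>d \<in> set ds\<close> i by (auto simp: allowed_step_def)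
  qed
  then show "ds \<in> {ds. length ds = m \<and> set ds \<subseteq> insert 1 {-(int m)..-3}}" using len H by blast
qed

lemma geo_bound:
  fixes q :: real assumes "0 \<le> q" "q < 1"
  shows "(\<Sum>j\<in>{3..m}. q ^ j) \<le> q^3 / (1 - q)"
proof -
  have "(\<Sum>j\<in>{3..m}. q ^ j) \<le> (\<Sum>j\<in>{3..<m+3}. q ^ j)"
    by (intro sum_mono2) (use assms in auto)
  also have "\<dots> = (\<Sum>j<m. q ^ (j+3))"
    by (rule sum.reindex_bij_witness[of _ "\<lambda>j. j+3" "\<lambda>j. j-3"]) auto
  also have "\<dots> = (\<Sum>j<m. q ^ j) * q^3"
    by (simp add: sum_distrib_right power_add)
  also have "(\<Sum>j<m. q ^ j) = (1 - q^m) / (1 - q)"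
    using geometric_sum[of q m] assms by (simp add: field_simps)
  also have "((1 - q^m) / (1 - q)) * q^3 \<le> q^3 / (1 - q)"
    proof -
    have "(1-q^m)*q^3 \<le> q^3" using assms by (intro mult_left_le_one_le) (auto simp: power_le_one)
    then show ?thesis using assms by (simp add: divide_right_mono)
  qed
  finally show ?thesis .
qed

lemma powi_neg: "(a::int) \<le> 0 \<Longrightarrow> (7/4::real) powi a = (4/7) ^ nat (-a)"
proof -
  assume "a \<le> 0"
  then have "a = - int (nat (-a))" by simp
  then have "(7/4::real) powi a = (7/4) powi (- int (nat (-a)))" by simp
  also have "\<dots> = inverse ((7/4) ^ nat (-a))" by (subst power_int_minus) (simp only: power_int_of_nat)
  also have "\<dots> = (4/7) ^ nat (-a)" by (simp add: power_inverse[symmetric])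
  finally show ?thesis .
qed

lemma T_bound: "real (T m) \<le> (7/4 + 64/147) ^ m"
proof -
  define x :: real where "x = 7/4"
  define S where "S = insert 1 {-(int m)..-3}"
  define A where "A = {ds. length ds = m \<and> set ds \<subseteq> S}"
  have finS: "finite S" by (simp add: S_def)
  have finA: "finite A" unfolding A_def using finite_lists_length_eq[OF finS, of m] by (simp add: conj_commute)
  have sub: "T_seqs m \<subseteq> A" using T_seqs_sub unfolding A_def S_def .
  have "real (T m) = (\<Sum>ds\<in>T_seqs m. 1)" by (simp add: T_def)
  also have "\<dots> \<le> (\<Sum>ds\<in>T_seqs m. x powi sum_list ds)"
    by (intro sum_mono) (auto simp: T_seqs_def x_def)
  also have "\<dots> = (\<Sum>ds\<in>T_seqs m. prod_list (map (\<lambda>d. x powi d) ds))"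
    by (intro sum.cong refl powi_sum_list) (simp add: x_def)
  also have "\<dots> \<le> (\<Sum>ds\<in>A. prod_list (map (\<lambda>d. x powi d) ds))"
    by (intro sum_mono2 finA sub prod_list_nonneg) (auto simp: x_def)
  also have "\<dots> = (\<Sum>s\<in>S. x powi s) ^ m"
    unfolding A_def by (rule sum_lists_prod[OF finS])
  also have "(\<Sum>s\<in>S. x powi s) \<le> 7/4 + 64/147"
  proof -
    have "(\<Sum>s\<in>S. x powi s) = x + (\<Sum>s\<in>{-(int m)..-3}. x powi s)"
      unfolding S_def by (subst sum.insert) (auto simp: x_def)
    also have "(\<Sum>s\<in>{-(int m)..-3}. x powi s) = (\<Sum>j\<in>{3..m}. (4/7::real) ^ j)"
      by (rule sum.reindex_bij_witness[of _ "\<lambda>j. - int j" "\<lambda>s. nat (-s)"])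
         (auto simp: x_def powi_neg)
    also have "\<dots> \<le> (4/7)^3 / (1 - 4/7)" by (rule geo_bound) auto
    finally show ?thesis by (simp add: x_def eval_nat_numeral)
  qed
  then have "(\<Sum>s\<in>S. x powi s) ^ m \<le> (7/4 + 64/147) ^ m"
    by (intro power_mono) (auto intro!: sum_nonneg simp: x_def)
  finally show ?thesis .
qed

lemma small: "(\<lambda>M::nat. ((7/4 + 64/147::real)^2) ^ M) \<in> o[sequentially](\<lambda>M. 5 ^ M)"
proof (rule smalloI_tendsto)
  have "(\<lambda>M::nat. ((7/4 + 64/147::real)^2 / 5) ^ M) \<longlonglongrightarrow> 0"
    by (intro LIMSEQ_power_zero) (simp add: power2_eq_square)
  then show "(\<lambda>M::nat. ((7/4 + 64/147::real)^2) ^ M / 5 ^ M) \<longlonglongrightarrow> 0"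
    by (simp only: power_divide)
  show "\<forall>\<^sub>F M in sequentially. (5::real) ^ M \<noteq> 0" by simp
qed

theorem mainTheorem4:
  shows "(\<lambda>M::nat. real (T (2 * M))) \<in> o[sequentially](\<lambda>M. 5 ^ M)"
proof (rule landau_o.big_small_trans[OF _ small])
  show "(\<lambda>M::nat. real (T (2 * M))) \<in> O(\<lambda>M. ((7/4 + 64/147::real)^2) ^ M)"
  proof (rule bigoI[where c=1], rule always_eventually, rule allI)
    fix M :: nat
    have "real (T (2*M)) \<le> (7/4 + 64/147) ^ (2*M)" by (rule T_bound)
    then show "norm (real (T (2 * M))) \<le> 1 * norm (((7/4 + 64/147::real)^2) ^ M)"
      by (simp add: power_mult)
  qed
qed

end
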